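(* In the setting described in the context, under the non-atomic assumption, for any player $i$, any contention windows $W_{-i}$ of the other players, and any $W_i<W_i'$, one has $\widehat S_i(W_i,W_{-i})>\widehat S_i(W_i',W_{-i})$; that is, given any strategies of the others, player $i$ obtains a strictly higher utility by decreasing its contention window.
   Context: Model: users $\mathcal N=\{1,\dots,n\}$, fixed integer $m\ge1$. User $i$ chooses a contention window (CW) $W_i\in\{0,1,2,\dots\}$ and a data rate $R_i\in[R_{min,i},R_{max,i}]$; $e_i$ is its packet error rate function (values in $[0,1]$, increasing in the rate), $G_i(R)=(1-e_i(R))R$. For $x\in[0,1]$, $\Gamma_i(x)=\frac{2}{W_i+1+xW_i\sum_{l=0}^{m-1}(2x)^l}$. Given $(W_j,R_j)_j$, the stationary state $(\tau_j,p_j,q_j)_j$ (assumed unique) solves $q_j=1-(1-p_j)(1-e_j(R_j))$, $\tau_j=\Gamma_j(q_j)$, $p_j=1-\prod_{k\ne j}(1-\tau_k)$; $\rho_j=1-\tau_j$. Utility: $S_i=\frac{(1-\rho_i)\prod_{j\ne i}\rho_j\,G_i(R_i)}{1-\prod_{j}\rho_j}$. For a CW profile $\mathbf W$, $\mathbf R^*(\mathbf W)$ denotes the unique Nash equilibrium of the rate adaptation game in which each player $i$ chooses $R_i\in[R_{min,i},R_{max,i}]$ to maximize $S_i$ with $\mathbf W$ fixed; and $\widehat S_i(\mathbf W)=S_i(\mathbf W,\mathbf R^*(\mathbf W))$ is the utility of player $i$ in the medium access game $G_M$. Non-atomic assumption: the number of users is large, so changing user $i$'s CW and rate leaves the states $(q_j,\tau_j,R_j)$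 of the other users $j\ne i$ unchanged; and $\prod_{j\in\mathcal N}\rho_j\simeq\prod_{j\ne i}\rho_j$. *)

theory Defs
  imports Complex_Main
begin

definition Gamma :: "nat \<Rightarrow> nat \<Rightarrow> real \<Rightarrow> real" where
  "Gamma m W x = 2 / (real W + 1 + x * real W * (\<Sum>l<m. (2 * x) ^ l))"

definition goodput :: "(real \<Rightarrow> real) \<Rightarrow> real \<Rightarrow> real" where
  "goodput e R = (1 - e R) * R"

text \<open>Non-atomic setting, viewpoint of player i: the stationary attempt
  probabilities tau_j of the other players j in N - {i} are fixed (they do not
  react to player i's choice of CW and rate).\<close>
definition others_prod :: "'a set \<Rightarrow> 'a \<Rightarrow> ('a \<Rightarrow> real) \<Rightarrow> real" where
  "others_prod N i tau = (\<Prod>j\<in>N - {i}. (1 - tau j))"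

definition coll_prob :: "'a set \<Rightarrow> 'a \<Rightarrow> ('a \<Rightarrow> real) \<Rightarrow> real" where
  "coll_prob N i tau = 1 - others_prod N i tau"

definition own_q :: "'a set \<Rightarrow> 'a \<Rightarrow> ('a \<Rightarrow> real) \<Rightarrow> (real \<Rightarrow> real) \<Rightarrow> real \<Rightarrow> real" where
  "own_q N i tau e R = 1 - (1 - coll_prob N i tau) * (1 - e R)"

definition own_tau :: "nat \<Rightarrow> 'a set \<Rightarrow> 'a \<Rightarrow> ('a \<Rightarrow> real) \<Rightarrow> (real \<Rightarrow> real) \<Rightarrow> nat \<Rightarrow> real \<Rightarrow> real" where
  "own_tau m N i tau e W R = Gamma m W (own_q N i tau e R)"

definition utility :: "nat \<Rightarrow> 'a set \<Rightarrow> 'a \<Rightarrow> ('a \<Rightarrow> real) \<Rightarrow> (real \<Rightarrow> real) \<Rightarrow> nat \<Rightarrow> real \<Rightarrow> real" where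
  "utility m N i tau e W R =
     (let ti = own_tau m N i tau e W R;
          P = others_prod N i tau
      in (1 - (1 - ti)) * P * goodput e R / (1 - (1 - ti) * P))"

text \<open>R is player i's equilibrium rate for CW W: with the others fixed (non-atomic
  assumption), the i-th component of the rate-game Nash equilibrium maximizes S_i
  over [Rmin, Rmax].  Hence hat S_i(W) = utility ... W R for such R.\<close>
definition best_rate :: "nat \<Rightarrow> 'a set \<Rightarrow> 'a \<Rightarrow> ('a \<Rightarrow> real) \<Rightarrow> (real \<Rightarrow> real) \<Rightarrow> real \<Rightarrow> real \<Rightarrow> nat \<Rightarrow> real \<Rightarrow> bool" where
  "best_rate m N i tau e Rmin Rmax W R \<longleftrightarrow>
     R \<in> {Rmin..Rmax} \<and>
     (\<forall>R'\<in>{Rmin..Rmax}. utility m N i tau e W R' \<le> utility m N i tau e W R)"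

end

theory Submission
  imports Defs
begin

lemma frac_mono:
  fixes P t1 t2 G :: real
  assumes "0 < P" "P < 1" "0 < t2" "t2 < t1" "0 < G"
  shows "t2 * P * G / (1 - (1 - t2) * P) < t1 * P * G / (1 - (1 - t1) * P)"
proof -
  have d1: "1 - (1 - t1) * P > 0"
  proof -
    have "1 - (1 - t1) * P = (1 - P) + t1 * P" by (simp add: algebra_simps)
    moreover have "t1 * P > 0" using assms by simp
    ultimately show ?thesis using assms by linarith
  qed
  have d2: "1 - (1 - t2) * P > 0"
  proof -
    have "1 - (1 - t2) * P = (1 - P) + t2 * P" by (simp add: algebra_simps)
    moreover have "t2 * P > 0" using assms by simp
    ultimately show ?thesis using assms by linarith
  qed
  have "t2 * (1 - (1 - t1) * P) < t1 * (1 - (1 - t2) * P)"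
  proof -
    have "t1 * (1 - (1 - t2) * P) - t2 * (1 - (1 - t1) * P) = (t1 - t2) * (1 - P)"
      by (simp add: algebra_simps)
    also have "... > 0" using assms by simp
    finally show ?thesis by simp
  qed
  hence "(t2 * (1 - (1 - t1) * P)) * (P * G) < (t1 * (1 - (1 - t2) * P)) * (P * G)"
    using assms by (intro mult_strict_right_mono) auto
  thus ?thesis using d1 d2 by (simp add: divide_simps algebra_simps)
qed

lemma frac_nonneg:
  fixes P t G :: real
  assumes "0 < P" "P < 1" "0 < t" "0 \<le> G"
  shows "0 \<le> t * P * G / (1 - (1 - t) * P)"
proof -
  have d1: "1 - (1 - t) * P > 0"
  proof -
    have "1 - (1 - t) * P = (1 - P) + t * P" by (simp add: algebra_simps)
    moreover have "t * P > 0" using assms by simp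
    ultimately show ?thesis using assms by linarith
  qed
  thus ?thesis using assms by simp
qed

lemma frac_pos:
  fixes P t G :: real
  assumes "0 < P" "P < 1" "0 < t" "0 < G"
  shows "0 < t * P * G / (1 - (1 - t) * P)"
proof -
  have d1: "1 - (1 - t) * P > 0"
  proof -
    have "1 - (1 - t) * P = (1 - P) + t * P" by (simp add: algebra_simps)
    moreover have "t * P > 0" using assms by simp
    ultimately show ?thesis using assms by linarith
  qed
  thus ?thesis using assms by simp
qed

lemma Gamma_pos: assumes "0 \<le> q" shows "0 < Gamma m W q"
proof -
  have "0 \<le> (\<Sum>l<m. (2 * q) ^ l)" using assms by (intro sum_nonneg) simp
  hence "0 \<le> q * real W * (\<Sum>l<m. (2 * q) ^ l)" using assms by simp
  thus ?thesis unfolding Gamma_def by simp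
qed

lemma Gamma_dec: assumes "0 \<le> q" "W1 < W2" shows "Gamma m W2 q < Gamma m W1 q"
proof -
  define s where "s = (\<Sum>l<m. (2 * q) ^ l)"
  have s: "0 \<le> s" unfolding s_def using assms by (intro sum_nonneg) simp
  have "real W1 + 1 + q * real W1 * s < real W2 + 1 + q * real W2 * s"
  proof -
    have "q * s * real W1 \<le> q * s * real W2" using assms s
      by (intro mult_left_mono) auto
    thus ?thesis using assms by (simp add: algebra_simps)
  qed
  moreover have "0 < real W1 + 1 + q * real W1 * s" using s assms
    by (smt (verit) mult_nonneg_nonneg of_nat_0_le_iff)
  ultimately show ?thesis unfolding Gamma_def s_def[symmetric]
    by (intro divide_strict_left_mono) auto
qed

theorem lemma5:
  fixes N :: "'a set" and i :: 'a and tau :: "'a \<Rightarrow> real"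
    and e :: "real \<Rightarrow> real" and Rmin Rmax :: real and m W1 W2 :: nat
    and R1 R2 :: real
  assumes "finite N" and "i \<in> N" and "N - {i} \<noteq> {}"
    and "\<forall>j\<in>N - {i}. 0 < tau j \<and> tau j < 1"
    and "m \<ge> 1"
    and "0 < Rmin" and "Rmin \<le> Rmax"
    and "\<forall>R\<in>{Rmin..Rmax}. 0 \<le> e R \<and> e R \<le> 1"
    and "mono_on {Rmin..Rmax} e"
    and "\<exists>R\<in>{Rmin..Rmax}. e R < 1"
    and "W1 < W2"
    and "best_rate m N i tau e Rmin Rmax W1 R1"
    and "best_rate m N i tau e Rmin Rmax W2 R2"
  shows "utility m N i tau e W1 R1 > utility m N i tau e W2 R2"
proof -
  define P where "P = others_prod N i tau"
  have P0: "0 < P" unfolding P_def others_prod_def using assms(4)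
    by (intro prod_pos) auto
  have P1: "P < 1"
  proof -
    obtain j where j: "j \<in> N - {i}" using assms(3) by blast
    have fin: "finite (N - {i})" using assms(1) by simp
    have "P = (1 - tau j) * (\<Prod>k\<in>N - {i} - {j}. (1 - tau k))"
      unfolding P_def others_prod_def using j fin by (simp add: prod.remove)
    moreover have "(\<Prod>k\<in>N - {i} - {j}. (1 - tau k)) \<le> 1"
      using assms(4) by (intro prod_le_1) force+
    moreover have "0 \<le> (\<Prod>k\<in>N - {i} - {j}. (1 - tau k))"
      using assms(4) by (intro prod_nonneg) force
    moreover have "0 < tau j" "tau j < 1" using assms(4) j by auto
    ultimately show ?thesis by (smt (verit) mult_left_le mult_nonneg_nonneg)
  qed
  have U: "utility m N i tau e W R = own_tau m N i tau e W R * P * goodput e R /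
      (1 - (1 - own_tau m N i tau e W R) * P)" for W R
    unfolding utility_def P_def Let_def by simp
  have q0: "0 \<le> own_q N i tau e R" if "R \<in> {Rmin..Rmax}" for R
  proof -
    have "own_q N i tau e R = 1 - P * (1 - e R)"
      unfolding own_q_def coll_prob_def P_def by simp
    moreover have "P * (1 - e R) \<le> 1" using P0 P1 assms(8) that
      by (smt (verit) mult_left_le mult_nonneg_nonneg)
    ultimately show ?thesis by simp
  qed
  have tpos: "0 < own_tau m N i tau e W R" if "R \<in> {Rmin..Rmax}" for W R
    unfolding own_tau_def using Gamma_pos q0[OF that] by blast
  have tdec: "own_tau m N i tau e W2 R < own_tau m N i tau e W1 R"
    if "R \<in> {Rmin..Rmax}" for R
    unfolding own_tau_def using Gamma_dec q0[OF that] assms(11) by blast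
  have Gnn: "0 \<le> goodput e R" if "R \<in> {Rmin..Rmax}" for R
    unfolding goodput_def using assms(6,8) that by auto
  have R1: "R1 \<in> {Rmin..Rmax}" and R2: "R2 \<in> {Rmin..Rmax}"
    using assms(12,13) unfolding best_rate_def by auto
  have b1: "utility m N i tau e W1 R \<le> utility m N i tau e W1 R1" if "R \<in> {Rmin..Rmax}" for R
    using assms(12) that unfolding best_rate_def by auto
  have b2: "utility m N i tau e W2 R \<le> utility m N i tau e W2 R2" if "R \<in> {Rmin..Rmax}" for R
    using assms(13) that unfolding best_rate_def by auto
  show ?thesis
  proof (cases "goodput e R2 > 0")
    case True
    have "utility m N i tau e W2 R2 < utility m N i tau e W1 R2"
      unfolding U using frac_mono[OF P0 P1 tpos[OF R2] tdec[OF R2] True] .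
    also have "... \<le> utility m N i tau e W1 R1" using b1 R2 .
    finally show ?thesis .
  next
    case False
    hence "goodput e R2 = 0" using Gnn[OF R2] by simp
    hence z: "utility m N i tau e W2 R2 = 0" unfolding U by simp
    obtain R where R: "R \<in> {Rmin..Rmax}" "e R < 1" using assms(10) by blast
    have "goodput e R > 0" unfolding goodput_def using R assms(6) by auto
    hence "0 < utility m N i tau e W1 R"
      unfolding U using frac_pos[OF P0 P1 tpos[OF R(1)]] by blast
    also have "... \<le> utility m N i tau e W1 R1" using b1 R(1) .
    finally show ?thesis using z by simp
  qed
qed

end
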